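(* Let $({\bf x}_i,y_i)$, $i=1,\dots,n$, with $y_i\in\{\pm1\}$, and let $\lambda_1>0$, $\lambda_2\ge0$, $\lambda_3>0$, $\delta>0$. Let $f(b,{\bf w})=\frac1n\sum_i\phi_H(y_i(b+{\bf x}_i^\top{\bf w}))$, $L_f=\frac{1}{n\delta}\sum_i y_i^2(1+\|{\bf x}_i\|^2)$, and let ${\bf u}^*=(b^*,{\bf w}^* )$ be the unique minimizer of $F(b,{\bf w})=f(b,{\bf w})+\lambda_1\|{\bf w}\|_1+\frac{\lambda_2}{2}\|{\bf w}\|^2+\frac{\lambda_3}{2}b^2$. Starting from any ${\bf u}^0=(b^0,{\bf w}^0)$, let $$b^k=\frac{L_f b^{k-1}-\nabla_b f({\bf u}^{k-1})}{L_f+\lambda_3},\qquad {\bf w}^k=\frac{1}{L_f+\lambda_2}\mathcal{S}_{\lambda_1}\big(L_f{\bf w}^{k-1}-\nabla_{\bf w}f({\bf u}^{k-1})\big),\quad k\ge1.$$ Let $Q(b,{\bf w})=f(b,{\bf w})+\frac{\lambda_2}{2}\|{\bf w}\|^2+\frac{\lambda_3}{2}b^2$, $h_i({\bf u})=w_i-\frac{1}{L_f+\lambda_2}\nabla_{w_i}Q({\bf u})$ for ${\bf u}=(b,{\bf w})$, and $$\mathcal{I}=\{i:|\nabla_{w_i}Q({\bf u}^* )|<\lambda_1\},\qquad \mathcal{E}=\{i:|\nabla_{w_i}Q({\bf u}^* )|=\lambda_1\}.$$ Then $\mathrm{supp}({\bf w}^* )\subset\mathcal{E}$ and $w_i^*=0$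 for all $i\in\mathcal{I}$. Moreover, for all but finitely many $k$, $w_i^k=0$ for all $i\in\mathcal{I}$ and $\mathrm{sign}(h_i({\bf u}^k))=\mathrm{sign}(h_i({\bf u}^* ))$ for all $i\in\mathcal{E}$.
   Context: $\phi_H$ is the huberized hinge loss: $\phi_H(t)=0$ for $t>1$, $\frac{(1-t)^2}{2\delta}$ for $1-\delta<t\le1$, $1-t-\frac\delta2$ for $t\le1-\delta$. $\mathcal{S}_\nu(t)=\mathrm{sign}(t)\max(|t|-\nu,0)$ componentwise. $w_i$ denotes the $i$-th component of ${\bf w}$ and $\mathrm{supp}({\bf w})=\{i:w_i\neq0\}$. The iteration above is the proximal gradient method with constant step parameter $L_f$ and no extrapolation. *)

theory Defs
  imports "HOL-Analysis.Analysis"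
begin

definition phiH :: "real \<Rightarrow> real \<Rightarrow> real" where
  "phiH \<delta> t = (if t > 1 then 0
                 else if 1 - \<delta> < t then (1 - t)^2 / (2 * \<delta>)
                 else 1 - t - \<delta> / 2)"

definition soft :: "real \<Rightarrow> real^'p \<Rightarrow> real^'p" where
  "soft \<nu> v = (\<chi> i. sgn (v $ i) * max (\<bar>v $ i\<bar> - \<nu>) 0)"

definition hfit :: "nat \<Rightarrow> (nat \<Rightarrow> real^'p) \<Rightarrow> (nat \<Rightarrow> real) \<Rightarrow> real
                    \<Rightarrow> real \<Rightarrow> real^'p \<Rightarrow> real" where
  "hfit n xs ys \<delta> b w = (1 / real n) * (\<Sum>i<n. phiH \<delta> (ys i * (b + xs i \<bullet> w)))"

definition Lconst :: "nat \<Rightarrow> (nat \<Rightarrow> real^'p) \<Rightarrow> (nat \<Rightarrow> real) \<Rightarrow> real \<Rightarrow> real" where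
  "Lconst n xs ys \<delta> = (1 / (real n * \<delta>)) * (\<Sum>i<n. (ys i)^2 * (1 + (norm (xs i))^2))"

definition l1norm :: "real^'p \<Rightarrow> real" where
  "l1norm w = (\<Sum>i\<in>UNIV. \<bar>w $ i\<bar>)"

definition pd_b :: "(real \<Rightarrow> real^'p \<Rightarrow> real) \<Rightarrow> real \<Rightarrow> real^'p \<Rightarrow> real" where
  "pd_b g b w = deriv (\<lambda>t. g t w) b"

definition pd_w :: "(real \<Rightarrow> real^'p \<Rightarrow> real) \<Rightarrow> real \<Rightarrow> real^'p \<Rightarrow> real^'p" where
  "pd_w g b w = (\<chi> j. deriv (\<lambda>t. g b (w + t *\<^sub>R axis j 1)) 0)"

end

theory Submission
  imports Defs
begin

definition qf :: "real \<Rightarrow> real" where "qf s = (max 0 s)^2"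

lemma qf_deriv: "(qf has_real_derivative 2 * max 0 s) (at s)"
proof (cases "s = 0")
  case True
  have "((\<lambda>h. (qf (s + h) - qf s) / h) \<longlongrightarrow> 2 * max 0 s) (at 0)"
  proof -
    have "((\<lambda>h::real. max 0 h) \<longlongrightarrow> max 0 0) (at 0)"
      by (intro tendsto_intros)
    then have "((\<lambda>h::real. max 0 h) \<longlongrightarrow> 0) (at 0)" by simp
    moreover have "\<forall>\<^sub>F h in at 0. max 0 h = (qf (s + h) - qf s) / h"
      unfolding eventually_at_filter
      by (rule always_eventually) (auto simp: True qf_def power2_eq_square max_def)
    ultimately show ?thesis using True by (simp add: tendsto_cong)
  qed
  then show ?thesis by (simp add: DERIV_def)
next
  case False
  show ?thesis
  proof (cases "s > 0")
    case True
    have "((\<lambda>x. x * x) has_real_derivative s + s) (at s)"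
      using DERIV_mult[OF DERIV_ident DERIV_ident, of s] by simp
    then have "(qf has_real_derivative s + s) (at s)"
      by (rule has_field_derivative_transform_within_open[where S="{0<..}"])
         (use True in \<open>auto simp: qf_def power2_eq_square\<close>)
    then show ?thesis using True by simp
  next
    case F2: False
    then have "s < 0" using False by simp
    have "((\<lambda>x. 0) has_real_derivative 0) (at s)" by simp
    then have "(qf has_real_derivative 0) (at s)"
      by (rule has_field_derivative_transform_within_open[where S="{..<0}"])
         (use \<open>s<0\<close> in \<open>auto simp: qf_def\<close>)
    then show ?thesis using \<open>s<0\<close> by simp
  qed
qed

lemma phiH_alt: assumes d: "\<delta> > 0" shows "phiH \<delta> t = (qf (1 - t) - qf (1 - \<delta> - t)) / (2 * \<delta>)"
proof -
  consider "t > 1" | "1 - \<delta> < t \<and> t \<le> 1" | "t \<le> 1 - \<delta>" by linarith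
  then show ?thesis
  proof cases
    case 1 then show ?thesis using d by (simp add: phiH_def qf_def)
  next
    case 2 then show ?thesis using d by (simp add: phiH_def qf_def)
  next
    case 3
    have a: "phiH \<delta> t = 1 - t - \<delta>/2" using d 3 by (simp add: phiH_def)
    have b: "qf (1 - t) = (1-t)^2" "qf (1 - \<delta> - t) = (1-\<delta>-t)^2" using 3 d by (simp_all add: qf_def)
    have c: "(1-t)^2 - (1-\<delta>-t)^2 = (1 - t - \<delta>/2) * (2*\<delta>)"
      by (simp add: algebra_simps power2_eq_square)
    have e: "((1 - t - \<delta>/2) * (2*\<delta>)) / (2*\<delta>) = 1 - t - \<delta>/2"
      using d by simp
    show ?thesis unfolding a b c e ..
  qed
qed

definition dphi :: "real \<Rightarrow> real \<Rightarrow> real" where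
  "dphi \<delta> t = (max 0 (1 - \<delta> - t) - max 0 (1 - t)) / \<delta>"

lemma phiH_deriv: assumes "\<delta> > 0" shows "(phiH \<delta> has_real_derivative dphi \<delta> t) (at t)"
proof -
  have e: "phiH \<delta> = (\<lambda>t. (qf (1 - t) - qf (1 - \<delta> - t)) / (2 * \<delta>))"
    using phiH_alt assms by auto
  have d1: "((\<lambda>t. qf (1 - t)) has_real_derivative (2 * max 0 (1-t)) * (-1)) (at t)"
    by (rule DERIV_chain2[OF qf_deriv]) (auto intro!: derivative_eq_intros)
  have d2: "((\<lambda>t. qf (1 - \<delta> - t)) has_real_derivative (2 * max 0 (1-\<delta>-t)) * (-1)) (at t)"
    by (rule DERIV_chain2[OF qf_deriv]) (auto intro!: derivative_eq_intros)
  have dd: "((\<lambda>t. (qf (1 - t) - qf (1 - \<delta> - t)) / (2 * \<delta>)) has_real_derivative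
        ((2 * max 0 (1-t)) * (-1) - (2 * max 0 (1-\<delta>-t)) * (-1)) / (2*\<delta>)) (at t)"
    by (intro DERIV_cdivide DERIV_diff d1 d2)
  have eq: "((2 * max 0 (1-t)) * (-1) - (2 * max 0 (1-\<delta>-t)) * (-1)) / (2*\<delta>) = (max 0 (1-\<delta>-t) - max 0 (1-t)) / \<delta>"
    using assms by (simp add: field_simps)
  have "((\<lambda>t. (qf (1 - t) - qf (1 - \<delta> - t)) / (2 * \<delta>)) has_real_derivative
        (max 0 (1-\<delta>-t) - max 0 (1-t)) / \<delta>) (at t)" using dd unfolding eq .
  then show ?thesis unfolding e dphi_def .
qed

definition pp :: "real \<Rightarrow> real \<Rightarrow> real" where
  "pp \<delta> x = (if x > 1 then 0 else if 1 - \<delta> < x then (1-x)^2 else 2*\<delta>*(1-x) - \<delta>^2)"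
definition dd :: "real \<Rightarrow> real \<Rightarrow> real" where
  "dd \<delta> x = (if x > 1 then 0 else if 1 - \<delta> < x then -2*(1-x) else -2*\<delta>)"

lemma up11: assumes "\<delta> > 0" "s > 1" "t > 1" shows "pp \<delta> s \<le> pp \<delta> t + dd \<delta> t * (s - t) + (s-t)^2"
proof -
  have v: "pp \<delta> s = 0 \<and> dd \<delta> s = 0" using assms by (simp add: pp_def dd_def)
  have w: "pp \<delta> t = 0 \<and> dd \<delta> t = 0" using assms by (simp add: pp_def dd_def)
  have h0: "0 \<le> (s-t)^2" by simp
  show ?thesis using h0 assms unfolding power2_eq_square by (simp add: v w algebra_simps power2_eq_square)
qed
lemma cv11: assumes "\<delta> > 0" "s > 1" "t > 1" shows "pp \<delta> t + dd \<delta> t * (s - t) \<le> pp \<delta> s"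
proof -
  have v: "pp \<delta> s = 0 \<and> dd \<delta> s = 0" using assms by (simp add: pp_def dd_def)
  have w: "pp \<delta> t = 0 \<and> dd \<delta> t = 0" using assms by (simp add: pp_def dd_def)
  have h0: "0 \<le> (s-t)^2" by simp
  show ?thesis using h0 assms unfolding power2_eq_square by (simp add: v w algebra_simps power2_eq_square)
qed
lemma up21: assumes "\<delta> > 0" "1 - \<delta> < s" "s \<le> 1" "t > 1" shows "pp \<delta> s \<le> pp \<delta> t + dd \<delta> t * (s - t) + (s-t)^2"
proof -
  have v: "pp \<delta> s = (1-s)^2 \<and> dd \<delta> s = -2*(1-s)" using assms by (simp add: pp_def dd_def)
  have w: "pp \<delta> t = 0 \<and> dd \<delta> t = 0" using assms by (simp add: pp_def dd_def)
  have h0: "0 \<le> (t-1) * (t+1-2 * s)" using assms by (intro mult_nonneg_nonneg) auto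
  have h1: "0 \<le> (s-t)^2" by simp
  show ?thesis using h0 h1 assms unfolding power2_eq_square by (simp add: v w algebra_simps power2_eq_square)
qed
lemma cv21: assumes "\<delta> > 0" "1 - \<delta> < s" "s \<le> 1" "t > 1" shows "pp \<delta> t + dd \<delta> t * (s - t) \<le> pp \<delta> s"
proof -
  have v: "pp \<delta> s = (1-s)^2 \<and> dd \<delta> s = -2*(1-s)" using assms by (simp add: pp_def dd_def)
  have w: "pp \<delta> t = 0 \<and> dd \<delta> t = 0" using assms by (simp add: pp_def dd_def)
  have h0: "0 \<le> (1-s)^2" by simp
  have h1: "0 \<le> (s-t)^2" by simp
  show ?thesis using h0 h1 assms unfolding power2_eq_square by (simp add: v w algebra_simps power2_eq_square)
qed
lemma up31: assumes "\<delta> > 0" "s \<le> 1 - \<delta>" "t > 1" shows "pp \<delta> s \<le> pp \<delta> t + dd \<delta> t * (s - t) + (s-t)^2"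
proof -
  have v: "pp \<delta> s = 2*\<delta>*(1-s) - \<delta>^2 \<and> dd \<delta> s = -2*\<delta>" using assms by (simp add: pp_def dd_def)
  have w: "pp \<delta> t = 0 \<and> dd \<delta> t = 0" using assms by (simp add: pp_def dd_def)
  have h0: "0 \<le> (t-1) * (t+1-2 * s)" using assms by (intro mult_nonneg_nonneg) auto
  have h1: "0 \<le> (1-s-\<delta>)^2" by simp
  have h2: "0 \<le> (s-t)^2" by simp
  show ?thesis using h0 h1 h2 assms unfolding power2_eq_square by (simp add: v w algebra_simps power2_eq_square)
qed
lemma cv31: assumes "\<delta> > 0" "s \<le> 1 - \<delta>" "t > 1" shows "pp \<delta> t + dd \<delta> t * (s - t) \<le> pp \<delta> s"
proof -
  have v: "pp \<delta> s = 2*\<delta>*(1-s) - \<delta>^2 \<and> dd \<delta> s = -2*\<delta>" using assms by (simp add: pp_def dd_def)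
  have w: "pp \<delta> t = 0 \<and> dd \<delta> t = 0" using assms by (simp add: pp_def dd_def)
  have h0: "0 \<le> \<delta> * (1-s-\<delta>)" using assms by (intro mult_nonneg_nonneg) auto
  have h1: "0 \<le> \<delta> * (1-s)" using assms by (intro mult_nonneg_nonneg) auto
  have h2: "0 \<le> (s-t)^2" by simp
  have "pp \<delta> s = \<delta> * (2 - 2 * s - \<delta>)" using v by (simp add: algebra_simps power2_eq_square)
  moreover have "0 \<le> \<delta> * (2 - 2 * s - \<delta>)" using assms by (intro mult_nonneg_nonneg) auto
  ultimately show ?thesis using w by simp
qed
lemma up12: assumes "\<delta> > 0" "s > 1" "1 - \<delta> < t" "t \<le> 1" shows "pp \<delta> s \<le> pp \<delta> t + dd \<delta> t * (s - t) + (s-t)^2"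
proof -
  have v: "pp \<delta> s = 0 \<and> dd \<delta> s = 0" using assms by (simp add: pp_def dd_def)
  have w: "pp \<delta> t = (1-t)^2 \<and> dd \<delta> t = -2*(1-t)" using assms by (simp add: pp_def dd_def)
  have h0: "0 \<le> (1-s)^2" by simp
  have h1: "0 \<le> (s-t)^2" by simp
  show ?thesis using h0 h1 assms unfolding power2_eq_square by (simp add: v w algebra_simps power2_eq_square)
qed
lemma cv12: assumes "\<delta> > 0" "s > 1" "1 - \<delta> < t" "t \<le> 1" shows "pp \<delta> t + dd \<delta> t * (s - t) \<le> pp \<delta> s"
proof -
  have v: "pp \<delta> s = 0 \<and> dd \<delta> s = 0" using assms by (simp add: pp_def dd_def)
  have w: "pp \<delta> t = (1-t)^2 \<and> dd \<delta> t = -2*(1-t)" using assms by (simp add: pp_def dd_def)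
  have h0: "0 \<le> (1-t) * (2 * s-t-1)" using assms by (intro mult_nonneg_nonneg) auto
  have h1: "0 \<le> (s-t)^2" by simp
  show ?thesis using h0 h1 assms unfolding power2_eq_square by (simp add: v w algebra_simps power2_eq_square)
qed
lemma up22: assumes "\<delta> > 0" "1 - \<delta> < s" "s \<le> 1" "1 - \<delta> < t" "t \<le> 1" shows "pp \<delta> s \<le> pp \<delta> t + dd \<delta> t * (s - t) + (s-t)^2"
proof -
  have v: "pp \<delta> s = (1-s)^2 \<and> dd \<delta> s = -2*(1-s)" using assms by (simp add: pp_def dd_def)
  have w: "pp \<delta> t = (1-t)^2 \<and> dd \<delta> t = -2*(1-t)" using assms by (simp add: pp_def dd_def)
  have h0: "0 \<le> (s-t)^2" by simp
  show ?thesis using h0 assms unfolding power2_eq_square by (simp add: v w algebra_simps power2_eq_square)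
qed
lemma cv22: assumes "\<delta> > 0" "1 - \<delta> < s" "s \<le> 1" "1 - \<delta> < t" "t \<le> 1" shows "pp \<delta> t + dd \<delta> t * (s - t) \<le> pp \<delta> s"
proof -
  have v: "pp \<delta> s = (1-s)^2 \<and> dd \<delta> s = -2*(1-s)" using assms by (simp add: pp_def dd_def)
  have w: "pp \<delta> t = (1-t)^2 \<and> dd \<delta> t = -2*(1-t)" using assms by (simp add: pp_def dd_def)
  have h0: "0 \<le> (s-t)^2" by simp
  show ?thesis using h0 assms unfolding power2_eq_square by (simp add: v w algebra_simps power2_eq_square)
qed
lemma up32: assumes "\<delta> > 0" "s \<le> 1 - \<delta>" "1 - \<delta> < t" "t \<le> 1" shows "pp \<delta> s \<le> pp \<delta> t + dd \<delta> t * (s - t) + (s-t)^2"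
proof -
  have v: "pp \<delta> s = 2*\<delta>*(1-s) - \<delta>^2 \<and> dd \<delta> s = -2*\<delta>" using assms by (simp add: pp_def dd_def)
  have w: "pp \<delta> t = (1-t)^2 \<and> dd \<delta> t = -2*(1-t)" using assms by (simp add: pp_def dd_def)
  have h0: "0 \<le> (1-s-\<delta>)^2" by simp
  have h1: "0 \<le> (s-t)^2" by simp
  show ?thesis using h0 h1 assms unfolding power2_eq_square by (simp add: v w algebra_simps power2_eq_square)
qed
lemma cv32: assumes "\<delta> > 0" "s \<le> 1 - \<delta>" "1 - \<delta> < t" "t \<le> 1" shows "pp \<delta> t + dd \<delta> t * (s - t) \<le> pp \<delta> s"
proof -
  have v: "pp \<delta> s = 2*\<delta>*(1-s) - \<delta>^2 \<and> dd \<delta> s = -2*\<delta>" using assms by (simp add: pp_def dd_def)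
  have w: "pp \<delta> t = (1-t)^2 \<and> dd \<delta> t = -2*(1-t)" using assms by (simp add: pp_def dd_def)
  have h0: "0 \<le> (t-1+\<delta>) * (t+1-2 * s-\<delta>)" using assms by (intro mult_nonneg_nonneg) auto
  have h1: "0 \<le> (s-t)^2" by simp
  show ?thesis using h0 h1 assms unfolding power2_eq_square by (simp add: v w algebra_simps power2_eq_square)
qed
lemma up13: assumes "\<delta> > 0" "s > 1" "t \<le> 1 - \<delta>" shows "pp \<delta> s \<le> pp \<delta> t + dd \<delta> t * (s - t) + (s-t)^2"
proof -
  have v: "pp \<delta> s = 0 \<and> dd \<delta> s = 0" using assms by (simp add: pp_def dd_def)
  have w: "pp \<delta> t = 2*\<delta>*(1-t) - \<delta>^2 \<and> dd \<delta> t = -2*\<delta>" using assms by (simp add: pp_def dd_def)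
  have h0: "0 \<le> \<delta> * (1-t-\<delta>)" using assms by (intro mult_nonneg_nonneg) auto
  have h1: "0 \<le> (s-t-\<delta>)^2" by simp
  have h2: "0 \<le> (s-t)^2" by simp
  show ?thesis using h0 h1 h2 assms unfolding power2_eq_square by (simp add: v w algebra_simps power2_eq_square)
qed
lemma cv13: assumes "\<delta> > 0" "s > 1" "t \<le> 1 - \<delta>" shows "pp \<delta> t + dd \<delta> t * (s - t) \<le> pp \<delta> s"
proof -
  have v: "pp \<delta> s = 0 \<and> dd \<delta> s = 0" using assms by (simp add: pp_def dd_def)
  have w: "pp \<delta> t = 2*\<delta>*(1-t) - \<delta>^2 \<and> dd \<delta> t = -2*\<delta>" using assms by (simp add: pp_def dd_def)
  have h0: "0 \<le> \<delta> * (s-1+\<delta>)" using assms by (intro mult_nonneg_nonneg) auto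
  have h1: "0 \<le> (s-t)^2" by simp
  have "pp \<delta> t + dd \<delta> t * (s - t) = - (\<delta> * (2 * s - 2 + \<delta>))" using w by (simp add: algebra_simps power2_eq_square)
  moreover have "0 \<le> \<delta> * (2 * s - 2 + \<delta>)" using assms by (intro mult_nonneg_nonneg) auto
  ultimately show ?thesis using v by simp
qed
lemma up23: assumes "\<delta> > 0" "1 - \<delta> < s" "s \<le> 1" "t \<le> 1 - \<delta>" shows "pp \<delta> s \<le> pp \<delta> t + dd \<delta> t * (s - t) + (s-t)^2"
proof -
  have v: "pp \<delta> s = (1-s)^2 \<and> dd \<delta> s = -2*(1-s)" using assms by (simp add: pp_def dd_def)
  have w: "pp \<delta> t = 2*\<delta>*(1-t) - \<delta>^2 \<and> dd \<delta> t = -2*\<delta>" using assms by (simp add: pp_def dd_def)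
  have h0: "0 \<le> (1-\<delta>-t) * (2 * s-t+\<delta>-1)" using assms by (intro mult_nonneg_nonneg) auto
  have h1: "0 \<le> (s-t)^2" by simp
  show ?thesis using h0 h1 assms unfolding power2_eq_square by (simp add: v w algebra_simps power2_eq_square)
qed
lemma cv23: assumes "\<delta> > 0" "1 - \<delta> < s" "s \<le> 1" "t \<le> 1 - \<delta>" shows "pp \<delta> t + dd \<delta> t * (s - t) \<le> pp \<delta> s"
proof -
  have v: "pp \<delta> s = (1-s)^2 \<and> dd \<delta> s = -2*(1-s)" using assms by (simp add: pp_def dd_def)
  have w: "pp \<delta> t = 2*\<delta>*(1-t) - \<delta>^2 \<and> dd \<delta> t = -2*\<delta>" using assms by (simp add: pp_def dd_def)
  have h0: "0 \<le> (1-s-\<delta>)^2" by simp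
  have h1: "0 \<le> (s-t)^2" by simp
  show ?thesis using h0 h1 assms unfolding power2_eq_square by (simp add: v w algebra_simps power2_eq_square)
qed
lemma up33: assumes "\<delta> > 0" "s \<le> 1 - \<delta>" "t \<le> 1 - \<delta>" shows "pp \<delta> s \<le> pp \<delta> t + dd \<delta> t * (s - t) + (s-t)^2"
proof -
  have v: "pp \<delta> s = 2*\<delta>*(1-s) - \<delta>^2 \<and> dd \<delta> s = -2*\<delta>" using assms by (simp add: pp_def dd_def)
  have w: "pp \<delta> t = 2*\<delta>*(1-t) - \<delta>^2 \<and> dd \<delta> t = -2*\<delta>" using assms by (simp add: pp_def dd_def)
  have h0: "0 \<le> (s-t)^2" by simp
  show ?thesis using h0 assms unfolding power2_eq_square by (simp add: v w algebra_simps power2_eq_square)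
qed
lemma cv33: assumes "\<delta> > 0" "s \<le> 1 - \<delta>" "t \<le> 1 - \<delta>" shows "pp \<delta> t + dd \<delta> t * (s - t) \<le> pp \<delta> s"
proof -
  have v: "pp \<delta> s = 2*\<delta>*(1-s) - \<delta>^2 \<and> dd \<delta> s = -2*\<delta>" using assms by (simp add: pp_def dd_def)
  have w: "pp \<delta> t = 2*\<delta>*(1-t) - \<delta>^2 \<and> dd \<delta> t = -2*\<delta>" using assms by (simp add: pp_def dd_def)
  have h0: "0 \<le> (s-t)^2" by simp
  show ?thesis using h0 assms unfolding power2_eq_square by (simp add: v w algebra_simps power2_eq_square)
qed
lemma pp_upper: assumes d: "\<delta> > 0" shows "pp \<delta> s \<le> pp \<delta> t + dd \<delta> t * (s - t) + (s-t)^2"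
proof -
  have T: "t > 1 \<or> (1 - \<delta> < t \<and> t \<le> 1) \<or> t \<le> 1 - \<delta>" by linarith
  consider (s1) "s > 1" | (s2) "1 - \<delta> < s" "s \<le> 1" | (s3) "s \<le> 1 - \<delta>" by linarith
  then show ?thesis
  proof cases
    case s1
    show ?thesis using T s1 up11[OF d] up12[OF d] up13[OF d] by blast
  next
    case s2
    show ?thesis using T s2 up21[OF d] up22[OF d] up23[OF d] by blast
  next
    case s3
    show ?thesis using T s3 up31[OF d] up32[OF d] up33[OF d] by blast
  qed
qed

lemma pp_convex: assumes d: "\<delta> > 0" shows "pp \<delta> t + dd \<delta> t * (s - t) \<le> pp \<delta> s"
proof -
  have T: "t > 1 \<or> (1 - \<delta> < t \<and> t \<le> 1) \<or> t \<le> 1 - \<delta>" by linarith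
  consider (s1) "s > 1" | (s2) "1 - \<delta> < s" "s \<le> 1" | (s3) "s \<le> 1 - \<delta>" by linarith
  then show ?thesis
  proof cases
    case s1
    show ?thesis using T s1 cv11[OF d] cv12[OF d] cv13[OF d] by blast
  next
    case s2
    show ?thesis using T s2 cv21[OF d] cv22[OF d] cv23[OF d] by blast
  next
    case s3
    show ?thesis using T s3 cv31[OF d] cv32[OF d] cv33[OF d] by blast
  qed
qed

lemma phiH_pp: assumes "\<delta> > 0" shows "phiH \<delta> x = pp \<delta> x / (2 * \<delta>)"
proof (cases "x \<le> 1 - \<delta>")
  case True
  have a: "phiH \<delta> x = 1 - x - \<delta>/2" using True assms by (simp add: phiH_def)
  have b: "pp \<delta> x = (1 - x - \<delta>/2) * (2*\<delta>)" using True assms by (simp add: pp_def algebra_simps power2_eq_square)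
  show ?thesis unfolding a b using assms by simp
next
  case False then show ?thesis using assms by (auto simp: phiH_def pp_def)
qed

lemma dphi_dd: assumes "\<delta> > 0" shows "dphi \<delta> x = dd \<delta> x / (2 * \<delta>)"
proof -
  consider "x > 1" | "1 - \<delta> < x \<and> x \<le> 1" | "x \<le> 1 - \<delta>" by linarith
  then show ?thesis
  proof cases
    case 1 then show ?thesis using assms by (simp add: dphi_def dd_def)
  next
    case 2
    then have a: "dphi \<delta> x = (x - 1) / \<delta>" and b: "dd \<delta> x = 2 * (x - 1)" using assms by (simp_all add: dphi_def dd_def)
    have c: "(2 * (x - 1)) / (2 * \<delta>) = (x-1) / \<delta>" by (rule mult_divide_mult_cancel_left) simp
    show ?thesis unfolding a b c ..
  next
    case 3
    then have "dphi \<delta> x = -1" using assms by (simp add: dphi_def)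
    moreover have "dd \<delta> x = -2 * \<delta>" using 3 assms by (simp add: dd_def)
    ultimately show ?thesis using assms by simp
  qed
qed

lemma phiH_upper: assumes d: "\<delta> > 0"
  shows "phiH \<delta> s \<le> phiH \<delta> t + dphi \<delta> t * (s - t) + (s - t)^2 / (2 * \<delta>)"
proof -
  have "pp \<delta> s / (2*\<delta>) \<le> (pp \<delta> t + dd \<delta> t * (s - t) + (s-t)^2) / (2*\<delta>)"
    using pp_upper[OF d] d by (intro divide_right_mono) auto
  then show ?thesis using d by (simp add: phiH_pp dphi_dd add_divide_distrib)
qed

lemma phiH_convex: assumes d: "\<delta> > 0"
  shows "phiH \<delta> t + dphi \<delta> t * (s - t) \<le> phiH \<delta> s"
proof -
  have "(pp \<delta> t + dd \<delta> t * (s - t)) / (2*\<delta>) \<le> pp \<delta> s / (2*\<delta>)"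
    using pp_convex[OF d] d by (intro divide_right_mono) auto
  then show ?thesis using d by (simp add: phiH_pp dphi_dd add_divide_distrib)
qed

lemma phiH_nonneg: assumes d: "\<delta> > 0" shows "0 \<le> phiH \<delta> t"
  using d by (auto simp: phiH_def)

lemma dphi_cont: assumes "\<delta> > 0" shows "continuous_on UNIV (dphi \<delta>)"
  unfolding dphi_def using assms by (intro continuous_intros) auto

lemma phiH_cont: assumes "\<delta> > 0" shows "continuous_on UNIV (phiH \<delta>)"
proof -
  have "phiH \<delta> = (\<lambda>t. (qf (1 - t) - qf (1 - \<delta> - t)) / (2 * \<delta>))"
    using phiH_alt assms by auto
  moreover have "continuous_on UNIV (\<lambda>t. (qf (1 - t) - qf (1 - \<delta> - t)) / (2 * \<delta>))"
    unfolding qf_def using assms by (intro continuous_intros) auto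
  ultimately show ?thesis by simp
qed


definition gb :: "nat \<Rightarrow> (nat \<Rightarrow> real^'p) \<Rightarrow> (nat \<Rightarrow> real) \<Rightarrow> real \<Rightarrow> real \<Rightarrow> real^'p \<Rightarrow> real" where
  "gb n xs ys \<delta> b w = (1 / real n) * (\<Sum>i<n. dphi \<delta> (ys i * (b + xs i \<bullet> w)) * ys i)"

definition gw :: "nat \<Rightarrow> (nat \<Rightarrow> real^'p) \<Rightarrow> (nat \<Rightarrow> real) \<Rightarrow> real \<Rightarrow> real \<Rightarrow> real^'p \<Rightarrow> real^'p" where
  "gw n xs ys \<delta> b w = (\<chi> j. (1 / real n) * (\<Sum>i<n. dphi \<delta> (ys i * (b + xs i \<bullet> w)) * ys i * (xs i $ j)))"

lemma pdb_hfit: assumes d: "\<delta> > 0" shows "pd_b (hfit n xs ys \<delta>) b w = gb n xs ys \<delta> b w"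
proof -
  have i: "((\<lambda>t. phiH \<delta> (ys i * (t + xs i \<bullet> w))) has_real_derivative dphi \<delta> (ys i * (b + xs i \<bullet> w)) * ys i) (at b)" for i
    by (rule DERIV_chain2[OF phiH_deriv[OF d]]) (auto intro!: derivative_eq_intros)
  have "((\<lambda>t. (1 / real n) * (\<Sum>i<n. phiH \<delta> (ys i * (t + xs i \<bullet> w)))) has_real_derivative
        (1 / real n) * (\<Sum>i<n. dphi \<delta> (ys i * (b + xs i \<bullet> w)) * ys i)) (at b)"
    by (intro DERIV_cmult DERIV_sum i)
  then show ?thesis unfolding pd_b_def hfit_def gb_def by (rule DERIV_imp_deriv)
qed

lemma inner_axis_shift: "(x::real^'p) \<bullet> (w + t *\<^sub>R axis j 1) = x \<bullet> w + t * x $ j"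
  by (simp add: inner_add_right inner_axis)

lemma pdw_hfit: assumes d: "\<delta> > 0" shows "pd_w (hfit n xs ys \<delta>) b w = gw n xs ys \<delta> b w"
proof -
  have "deriv (\<lambda>t. hfit n xs ys \<delta> b (w + t *\<^sub>R axis j 1)) 0 = gw n xs ys \<delta> b w $ j" for j
  proof -
    have i: "((\<lambda>t. phiH \<delta> (ys i * (b + (xs i \<bullet> w + t * xs i $ j)))) has_real_derivative
        dphi \<delta> (ys i * (b + (xs i \<bullet> w + 0 * xs i $ j))) * (ys i * xs i $ j)) (at 0)" for i
      by (rule DERIV_chain2[OF phiH_deriv[OF d]]) (auto intro!: derivative_eq_intros)
    have "((\<lambda>t. (1 / real n) * (\<Sum>i<n. phiH \<delta> (ys i * (b + (xs i \<bullet> w + t * xs i $ j))))) has_real_derivative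
        (1 / real n) * (\<Sum>i<n. dphi \<delta> (ys i * (b + (xs i \<bullet> w + 0 * xs i $ j))) * (ys i * xs i $ j))) (at 0)"
      by (intro DERIV_cmult DERIV_sum i)
    then have "deriv (\<lambda>t. (1 / real n) * (\<Sum>i<n. phiH \<delta> (ys i * (b + (xs i \<bullet> w + t * xs i $ j))))) 0
       = (1 / real n) * (\<Sum>i<n. dphi \<delta> (ys i * (b + (xs i \<bullet> w + 0 * xs i $ j))) * (ys i * xs i $ j))"
      by (rule DERIV_imp_deriv)
    then show ?thesis unfolding hfit_def gw_def inner_axis_shift by (simp add: mult.assoc)
  qed
  then show ?thesis unfolding pd_w_def by (simp add: vec_eq_iff)
qed

lemma norm_shift_sq: "(norm ((w::real^'p) + t *\<^sub>R axis j 1))^2 = (norm w)^2 + 2 * t * w $ j + t^2"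
proof -
  have "(norm (w + t *\<^sub>R axis j 1))^2 = (w + t *\<^sub>R axis j 1) \<bullet> (w + t *\<^sub>R axis j 1)"
    by (simp add: power2_norm_eq_inner)
  also have "\<dots> = w \<bullet> w + 2 * t * (w \<bullet> axis j 1) + t^2 * (axis j 1 \<bullet> axis j (1::real))"
    by (simp add: inner_add_left inner_add_right inner_commute algebra_simps power2_eq_square)
  also have "\<dots> = (norm w)^2 + 2 * t * w $ j + t^2"
    by (simp add: inner_axis inner_axis_axis power2_norm_eq_inner)
  finally show ?thesis .
qed

lemma pdw_Q: assumes d: "\<delta> > 0"
  shows "pd_w (\<lambda>b w. hfit n xs ys \<delta> b w + lam2 / 2 * (norm w)^2 + lam3 / 2 * b^2) b w
         = gw n xs ys \<delta> b w + lam2 *\<^sub>R w"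
proof -
  have "deriv (\<lambda>t. hfit n xs ys \<delta> b (w + t *\<^sub>R axis j 1) + lam2 / 2 * (norm (w + t *\<^sub>R axis j 1))^2 + lam3 / 2 * b^2) 0
        = gw n xs ys \<delta> b w $ j + lam2 * w $ j" for j
  proof -
    have h: "((\<lambda>t. hfit n xs ys \<delta> b (w + t *\<^sub>R axis j 1)) has_real_derivative gw n xs ys \<delta> b w $ j) (at 0)"
    proof -
      have i: "((\<lambda>t. phiH \<delta> (ys i * (b + (xs i \<bullet> w + t * xs i $ j)))) has_real_derivative
          dphi \<delta> (ys i * (b + (xs i \<bullet> w + 0 * xs i $ j))) * (ys i * xs i $ j)) (at 0)" for i
        by (rule DERIV_chain2[OF phiH_deriv[OF d]]) (auto intro!: derivative_eq_intros)
      have "((\<lambda>t. (1 / real n) * (\<Sum>i<n. phiH \<delta> (ys i * (b + (xs i \<bullet> w + t * xs i $ j))))) has_real_derivative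
          (1 / real n) * (\<Sum>i<n. dphi \<delta> (ys i * (b + (xs i \<bullet> w + 0 * xs i $ j))) * (ys i * xs i $ j))) (at 0)"
        by (intro DERIV_cmult DERIV_sum i)
      then show ?thesis unfolding hfit_def gw_def inner_axis_shift by (simp add: mult.assoc)
    qed
    have q: "((\<lambda>t. lam2 / 2 * ((norm w)^2 + 2 * t * w $ j + t^2) + lam3 / 2 * b^2) has_real_derivative lam2 * w $ j) (at 0)"
      by (auto intro!: derivative_eq_intros)
    have "((\<lambda>t. hfit n xs ys \<delta> b (w + t *\<^sub>R axis j 1) + (lam2 / 2 * ((norm w)^2 + 2 * t * w $ j + t^2) + lam3 / 2 * b^2))
          has_real_derivative gw n xs ys \<delta> b w $ j + lam2 * w $ j) (at 0)"
      by (rule DERIV_add[OF h q])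
    then show ?thesis unfolding norm_shift_sq by (intro DERIV_imp_deriv) (simp add: add.assoc)
  qed
  then show ?thesis unfolding pd_w_def by (simp add: vec_eq_iff)
qed


lemma gw_inner: "gw n xs ys \<delta> b w \<bullet> v = (1 / real n) * (\<Sum>i<n. dphi \<delta> (ys i * (b + xs i \<bullet> w)) * ys i * (xs i \<bullet> v))"
proof -
  have "gw n xs ys \<delta> b w \<bullet> v = (\<Sum>j\<in>UNIV. (1 / real n) * (\<Sum>i<n. dphi \<delta> (ys i * (b + xs i \<bullet> w)) * ys i * (xs i $ j)) * v $ j)"
    by (simp add: gw_def inner_vec_def)
  also have "\<dots> = (1 / real n) * (\<Sum>j\<in>UNIV. \<Sum>i<n. dphi \<delta> (ys i * (b + xs i \<bullet> w)) * ys i * (xs i $ j) * v $ j)"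
    by (simp add: sum_distrib_left sum_distrib_right mult.assoc)
  also have "\<dots> = (1 / real n) * (\<Sum>i<n. \<Sum>j\<in>UNIV. dphi \<delta> (ys i * (b + xs i \<bullet> w)) * ys i * (xs i $ j) * v $ j)"
    by (subst sum.swap) simp
  also have "\<dots> = (1 / real n) * (\<Sum>i<n. dphi \<delta> (ys i * (b + xs i \<bullet> w)) * ys i * (xs i \<bullet> v))"
    by (simp add: inner_vec_def sum_distrib_left mult.assoc)
  finally show ?thesis .
qed

lemma cs_aux: fixes x v :: "real^'p" shows "(a + x \<bullet> v)^2 \<le> (1 + (norm x)^2) * (a^2 + (norm v)^2)"
proof -
  have p: "\<bar>x \<bullet> v\<bar> \<le> norm x * norm v" by (rule Cauchy_Schwarz_ineq2)
  have "(a + x \<bullet> v)^2 \<le> (\<bar>a\<bar> + norm x * norm v)^2"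
  proof -
    have "\<bar>a + x \<bullet> v\<bar> \<le> \<bar>a\<bar> + norm x * norm v" using p by linarith
    then have "\<bar>a + x \<bullet> v\<bar>^2 \<le> (\<bar>a\<bar> + norm x * norm v)^2" by (rule power_mono) simp
    then show ?thesis by simp
  qed
  also have "\<dots> \<le> (1 + (norm x)^2) * (a^2 + (norm v)^2)"
  proof -
    have "0 \<le> (norm x * \<bar>a\<bar> - norm v)^2" by simp
    then show ?thesis by (simp add: power2_eq_square algebra_simps)
  qed
  finally show ?thesis .
qed

lemma alg1a: "(1 / N) * (C * D / (2 * d)) = ((1 / (N * d)) * C) / 2 * (D::real)"
  by simp
lemma alg1: "(1 / N) * (P + G * x + H + C * D / (2 * d)) = (1 / N) * P + ((1 / N) * G) * x + (1 / N) * H + ((1 / (N * d)) * C) / 2 * (D::real)"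
  by (simp only: distrib_left alg1a mult.assoc)

lemma alg2: "(1 / N) * (P + G * x + H) = (1 / N) * P + ((1 / N) * G) * x + (1 / N) * (H::real)"
  by (simp only: distrib_left mult.assoc)

lemma hfit_upper:
  assumes d: "\<delta> > 0"
  shows "hfit n xs ys \<delta> b' w' \<le> hfit n xs ys \<delta> b w + gb n xs ys \<delta> b w * (b' - b) + gw n xs ys \<delta> b w \<bullet> (w' - w)
          + Lconst n xs ys \<delta> / 2 * ((b' - b)^2 + (norm (w' - w))^2)"
proof -
  define D where "D = (b' - b)^2 + (norm (w' - w))^2"
  define s where "s i = ys i * (b + xs i \<bullet> w)" for i
  define s' where "s' i = ys i * (b' + xs i \<bullet> w')" for i
  define c where "c i = (ys i)^2 * (1 + (norm (xs i))^2)" for i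
  have per: "phiH \<delta> (s' i) \<le> phiH \<delta> (s i) + dphi \<delta> (s i) * ys i * (b' - b) + dphi \<delta> (s i) * ys i * (xs i \<bullet> (w' - w))
       + c i * D / (2 * \<delta>)" for i
  proof -
    have e: "s' i - s i = ys i * ((b' - b) + xs i \<bullet> (w' - w))"
      unfolding s_def s'_def by (simp add: inner_diff_right algebra_simps)
    have "(s' i - s i)^2 = (ys i)^2 * ((b' - b) + xs i \<bullet> (w' - w))^2"
      unfolding e by (simp add: power_mult_distrib)
    also have "\<dots> \<le> (ys i)^2 * ((1 + (norm (xs i))^2) * D)"
      unfolding D_def by (intro mult_left_mono cs_aux) simp
    finally have sq: "(s' i - s i)^2 \<le> c i * D" unfolding c_def by (simp add: mult.assoc)
    have "(s' i - s i)^2 / (2 * \<delta>) \<le> c i * D / (2 * \<delta>)"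
      using sq d by (intro divide_right_mono) auto
    moreover have "dphi \<delta> (s i) * (s' i - s i) = dphi \<delta> (s i) * ys i * (b' - b) + dphi \<delta> (s i) * ys i * (xs i \<bullet> (w' - w))"
      unfolding e by (simp add: algebra_simps)
    ultimately show ?thesis using phiH_upper[OF d, of "s' i" "s i"] by linarith
  qed
  have "(\<Sum>i<n. phiH \<delta> (s' i)) \<le> (\<Sum>i<n. phiH \<delta> (s i) + dphi \<delta> (s i) * ys i * (b' - b) + dphi \<delta> (s i) * ys i * (xs i \<bullet> (w' - w))
       + c i * D / (2 * \<delta>))"
    by (rule sum_mono) (rule per)
  also have "\<dots> = (\<Sum>i<n. phiH \<delta> (s i)) + (\<Sum>i<n. dphi \<delta> (s i) * ys i) * (b' - b) + (\<Sum>i<n. dphi \<delta> (s i) * ys i * (xs i \<bullet> (w' - w)))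
       + (\<Sum>i<n. c i) * D / (2 * \<delta>)"
    by (simp add: sum.distrib sum_distrib_right sum_divide_distrib)
  finally have S: "(\<Sum>i<n. phiH \<delta> (s' i)) \<le> \<dots>" .
  have "(1 / real n) * (\<Sum>i<n. phiH \<delta> (s' i)) \<le> (1 / real n) * ((\<Sum>i<n. phiH \<delta> (s i)) + (\<Sum>i<n. dphi \<delta> (s i) * ys i) * (b' - b) + (\<Sum>i<n. dphi \<delta> (s i) * ys i * (xs i \<bullet> (w' - w)))
       + (\<Sum>i<n. c i) * D / (2 * \<delta>))"
    by (rule mult_left_mono[OF S]) simp
  also have "\<dots> = hfit n xs ys \<delta> b w + gb n xs ys \<delta> b w * (b' - b) + gw n xs ys \<delta> b w \<bullet> (w' - w)
          + Lconst n xs ys \<delta> / 2 * D"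
    unfolding hfit_def gb_def gw_inner Lconst_def s_def c_def
    by (rule alg1)
  finally show ?thesis unfolding hfit_def s'_def D_def .
qed

lemma hfit_convex:
  assumes d: "\<delta> > 0"
  shows "hfit n xs ys \<delta> b w + gb n xs ys \<delta> b w * (b' - b) + gw n xs ys \<delta> b w \<bullet> (w' - w) \<le> hfit n xs ys \<delta> b' w'"
proof -
  define s where "s i = ys i * (b + xs i \<bullet> w)" for i
  define s' where "s' i = ys i * (b' + xs i \<bullet> w')" for i
  have per: "phiH \<delta> (s i) + dphi \<delta> (s i) * ys i * (b' - b) + dphi \<delta> (s i) * ys i * (xs i \<bullet> (w' - w)) \<le> phiH \<delta> (s' i)" for i
  proof -
    have e: "s' i - s i = ys i * ((b' - b) + xs i \<bullet> (w' - w))"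
      unfolding s_def s'_def by (simp add: inner_diff_right algebra_simps)
    have "dphi \<delta> (s i) * (s' i - s i) = dphi \<delta> (s i) * ys i * (b' - b) + dphi \<delta> (s i) * ys i * (xs i \<bullet> (w' - w))"
      unfolding e by (simp add: algebra_simps)
    then show ?thesis using phiH_convex[OF d, of "s i" "s' i"] by linarith
  qed
  have "(\<Sum>i<n. phiH \<delta> (s i) + dphi \<delta> (s i) * ys i * (b' - b) + dphi \<delta> (s i) * ys i * (xs i \<bullet> (w' - w))) \<le> (\<Sum>i<n. phiH \<delta> (s' i))"
    by (rule sum_mono) (rule per)
  then have S: "(\<Sum>i<n. phiH \<delta> (s i)) + (\<Sum>i<n. dphi \<delta> (s i) * ys i) * (b' - b) + (\<Sum>i<n. dphi \<delta> (s i) * ys i * (xs i \<bullet> (w' - w))) \<le> (\<Sum>i<n. phiH \<delta> (s' i))"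
    by (simp add: sum.distrib sum_distrib_right)
  have "(1 / real n) * ((\<Sum>i<n. phiH \<delta> (s i)) + (\<Sum>i<n. dphi \<delta> (s i) * ys i) * (b' - b) + (\<Sum>i<n. dphi \<delta> (s i) * ys i * (xs i \<bullet> (w' - w)))) \<le> (1 / real n) * (\<Sum>i<n. phiH \<delta> (s' i))"
    by (rule mult_left_mono[OF S]) simp
  moreover have "(1 / real n) * ((\<Sum>i<n. phiH \<delta> (s i)) + (\<Sum>i<n. dphi \<delta> (s i) * ys i) * (b' - b) + (\<Sum>i<n. dphi \<delta> (s i) * ys i * (xs i \<bullet> (w' - w))))
     = hfit n xs ys \<delta> b w + gb n xs ys \<delta> b w * (b' - b) + gw n xs ys \<delta> b w \<bullet> (w' - w)"
    unfolding hfit_def gb_def gw_inner s_def by (rule alg2)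
  ultimately show ?thesis unfolding hfit_def s'_def by simp
qed


lemma prox1d:
  fixes L lam l1 r v c g z :: real
  assumes m: "L + lam > 0" and L: "L \<ge> 0" and lam: "lam \<ge> 0" and l1: "l1 \<ge> 0"
    and v: "(L + lam) * v = sgn r * max (\<bar>r\<bar> - l1) 0" and r: "r = L * c - g"
  shows "g * (v - c) + L / 2 * (v - c)^2 + lam / 2 * v^2 + l1 * \<bar>v\<bar> + L / 2 * (z - v)^2
         \<le> g * (z - c) + L / 2 * (z - c)^2 + lam / 2 * z^2 + l1 * \<bar>z\<bar>"
proof -
  define M where "M = L + lam"
  have key: "(g * (z - c) + L / 2 * (z - c)^2 + lam / 2 * z^2 + l1 * \<bar>z\<bar>) - (g * (v - c) + L / 2 * (v - c)^2 + lam / 2 * v^2 + l1 * \<bar>v\<bar>)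
     = (z - v) * (M * v - r) + M / 2 * (z - v)^2 + (l1 * \<bar>z\<bar> - l1 * \<bar>v\<bar>)"
    unfolding M_def r by (simp add: field_simps power2_eq_square)
  have sub: "(z - v) * (M * v - r) + (l1 * \<bar>z\<bar> - l1 * \<bar>v\<bar>) \<ge> 0"
  proof (cases "\<bar>r\<bar> \<le> l1")
    case True
    then have "M * v = 0" using v unfolding M_def by simp
    then have v0: "v = 0" using m unfolding M_def by simp
    have "r * z \<le> \<bar>r\<bar> * \<bar>z\<bar>" by (metis abs_ge_self abs_mult)
    also have "\<dots> \<le> l1 * \<bar>z\<bar>" using True by (intro mult_right_mono) auto
    finally show ?thesis using v0 \<open>M * v = 0\<close> by (simp add: algebra_simps)
  next
    case False
    show ?thesis
    proof (cases "r > 0")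
      case True
      then have Mv: "M * v = r - l1" using v False unfolding M_def by (simp add: max_def)
      then have "v > 0" using False True m unfolding M_def by (metis abs_of_pos diff_gt_0_iff_gt not_le zero_less_mult_pos)
      then have "(z - v) * (M * v - r) + (l1 * \<bar>z\<bar> - l1 * \<bar>v\<bar>) = l1 * (\<bar>z\<bar> - z)"
      proof -
        have rr: "r = M * v + l1" using Mv by simp
        show ?thesis unfolding rr using \<open>v > 0\<close> by (simp add: algebra_simps)
      qed
      also have "\<dots> \<ge> 0" using l1 by simp
      finally show ?thesis by simp
    next
      case F2: False
      then have rneg: "r < 0" using False l1 by auto
      then have Mv: "M * v = r + l1" using v False unfolding M_def by (simp add: max_def)
      then have "M * v < 0" using False rneg by simp
      then have "v < 0" using m unfolding M_def by (simp add: mult_less_0_iff)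
      then have "(z - v) * (M * v - r) + (l1 * \<bar>z\<bar> - l1 * \<bar>v\<bar>) = l1 * (\<bar>z\<bar> + z)"
      proof -
        have rr: "r = M * v - l1" using Mv by simp
        show ?thesis unfolding rr using \<open>v < 0\<close> by (simp add: algebra_simps)
      qed
      also have "\<dots> \<ge> 0" using l1 by simp
      finally show ?thesis by simp
    qed
  qed
  have "L / 2 * (z - v)^2 \<le> M / 2 * (z - v)^2"
    unfolding M_def using lam by (intro mult_right_mono) auto
  then show ?thesis using key sub by linarith
qed

lemma norm_sq_sum: "(norm (x::real^'p))^2 = (\<Sum>j\<in>UNIV. (x $ j)^2)"
  unfolding power2_norm_eq_inner inner_vec_def by (simp add: power2_eq_square)

lemma inner_sum: "(x::real^'p) \<bullet> y = (\<Sum>j\<in>UNIV. x $ j * y $ j)"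
  by (simp add: inner_vec_def)


definition Fobj :: "nat \<Rightarrow> (nat \<Rightarrow> real^'p) \<Rightarrow> (nat \<Rightarrow> real) \<Rightarrow> real \<Rightarrow> real \<Rightarrow> real \<Rightarrow> real \<Rightarrow> real \<Rightarrow> real^'p \<Rightarrow> real" where
  "Fobj n xs ys \<delta> lam1 lam2 lam3 b w = hfit n xs ys \<delta> b w + lam1 * l1norm w + lam2 / 2 * (norm w)^2 + lam3 / 2 * b^2"

lemma ista_step:
  fixes xs :: "nat \<Rightarrow> real^'p" and w w1 zw :: "real^'p"
  assumes d: "\<delta> > 0" and Ldef: "L = Lconst n xs ys \<delta>" and Lpos: "L > 0"
    and l1: "lam1 \<ge> 0" and l2: "lam2 \<ge> 0" and l3: "lam3 \<ge> 0"
    and b1: "b1 = (L * b - gb n xs ys \<delta> b w) / (L + lam3)"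
    and w1: "w1 = (1 / (L + lam2)) *\<^sub>R soft lam1 (L *\<^sub>R w - gw n xs ys \<delta> b w)"
  shows "Fobj n xs ys \<delta> lam1 lam2 lam3 b1 w1 + L / 2 * ((zb - b1)^2 + (norm (zw - w1))^2)
         \<le> Fobj n xs ys \<delta> lam1 lam2 lam3 zb zw + L / 2 * ((zb - b)^2 + (norm (zw - w))^2)"
proof -
  define G where "G = gb n xs ys \<delta> b w"
  define g where "g = gw n xs ys \<delta> b w"
  have U: "hfit n xs ys \<delta> b1 w1 \<le> hfit n xs ys \<delta> b w + G * (b1 - b) + g \<bullet> (w1 - w) + L / 2 * ((b1 - b)^2 + (norm (w1 - w))^2)"
    unfolding G_def g_def Ldef by (rule hfit_upper[OF d])
  have C: "hfit n xs ys \<delta> b w + G * (zb - b) + g \<bullet> (zw - w) \<le> hfit n xs ys \<delta> zb zw"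
    unfolding G_def g_def by (rule hfit_convex[OF d])
  have PB: "G * (b1 - b) + L / 2 * (b1 - b)^2 + lam3 / 2 * b1^2 + 0 * \<bar>b1\<bar> + L / 2 * (zb - b1)^2
         \<le> G * (zb - b) + L / 2 * (zb - b)^2 + lam3 / 2 * zb^2 + 0 * \<bar>zb\<bar>"
  proof (rule prox1d[where r = "L * b - G"])
    show "L + lam3 > 0" "L \<ge> 0" "lam3 \<ge> 0" "(0::real) \<le> 0" using Lpos l3 by auto
    have "(L + lam3) * b1 = L * b - G" unfolding b1 G_def using Lpos l3 by simp
    also have "\<dots> = sgn (L * b - G) * max (\<bar>L * b - G\<bar> - 0) 0" by (simp add: sgn_mult_abs)
    finally show "(L + lam3) * b1 = sgn (L * b - G) * max (\<bar>L * b - G\<bar> - 0) 0" .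
  qed simp
  have PW: "g $ j * (w1 $ j - w $ j) + L / 2 * (w1 $ j - w $ j)^2 + lam2 / 2 * (w1 $ j)^2 + lam1 * \<bar>w1 $ j\<bar> + L / 2 * (zw $ j - w1 $ j)^2
         \<le> g $ j * (zw $ j - w $ j) + L / 2 * (zw $ j - w $ j)^2 + lam2 / 2 * (zw $ j)^2 + lam1 * \<bar>zw $ j\<bar>" for j
  proof (rule prox1d[where r = "L * w $ j - g $ j"])
    show "L + lam2 > 0" "L \<ge> 0" "lam2 \<ge> 0" "lam1 \<ge> 0" using Lpos l2 l1 by auto
    show "(L + lam2) * w1 $ j = sgn (L * w $ j - g $ j) * max (\<bar>L * w $ j - g $ j\<bar> - lam1) 0"
      unfolding w1 g_def soft_def using Lpos l2 by simp
  qed simp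
  have PWs: "(\<Sum>j\<in>UNIV. g $ j * (w1 $ j - w $ j) + L / 2 * (w1 $ j - w $ j)^2 + lam2 / 2 * (w1 $ j)^2 + lam1 * \<bar>w1 $ j\<bar> + L / 2 * (zw $ j - w1 $ j)^2)
         \<le> (\<Sum>j\<in>UNIV. g $ j * (zw $ j - w $ j) + L / 2 * (zw $ j - w $ j)^2 + lam2 / 2 * (zw $ j)^2 + lam1 * \<bar>zw $ j\<bar>)"
    by (rule sum_mono) (rule PW)
  have E1: "(\<Sum>j\<in>UNIV. g $ j * (w1 $ j - w $ j) + L / 2 * (w1 $ j - w $ j)^2 + lam2 / 2 * (w1 $ j)^2 + lam1 * \<bar>w1 $ j\<bar> + L / 2 * (zw $ j - w1 $ j)^2)
     = g \<bullet> (w1 - w) + L / 2 * (norm (w1 - w))^2 + lam2 / 2 * (norm w1)^2 + lam1 * l1norm w1 + L / 2 * (norm (zw - w1))^2"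
    by (simp add: sum.distrib sum_distrib_left inner_sum norm_sq_sum l1norm_def)
  have E2: "(\<Sum>j\<in>UNIV. g $ j * (zw $ j - w $ j) + L / 2 * (zw $ j - w $ j)^2 + lam2 / 2 * (zw $ j)^2 + lam1 * \<bar>zw $ j\<bar>)
     = g \<bullet> (zw - w) + L / 2 * (norm (zw - w))^2 + lam2 / 2 * (norm zw)^2 + lam1 * l1norm zw"
    by (simp add: sum.distrib sum_distrib_left inner_sum norm_sq_sum l1norm_def)
  show ?thesis using U C PB PWs E1 E2 unfolding Fobj_def by (simp add: algebra_simps)
qed


lemma telesc:
  fixes a D :: "nat \<Rightarrow> real"
  assumes a0: "\<And>k. a k \<ge> 0" and st: "\<And>k. a k + c * D (Suc k) \<le> c * D k" and D0: "\<And>k. D k \<ge> 0" and c: "c > 0"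
  shows "a \<longlonglongrightarrow> 0"
proof -
  have "(\<Sum>k<N. a k) \<le> c * D 0 - c * D N" for N
  proof (induction N)
    case 0 then show ?case by simp
  next
    case (Suc N) then show ?case using st[of N] by simp
  qed
  moreover have "c * D N \<ge> 0" for N using c D0[of N] by simp
  ultimately have "(\<Sum>k<N. a k) \<le> c * D 0" for N by (smt (verit))
  then have "summable a" using a0 by (intro summableI_nonneg_bounded) auto
  then show ?thesis by (rule summable_LIMSEQ_zero)
qed

lemma sharp_min:
  fixes FP :: "'a::heine_borel \<Rightarrow> real"
  assumes cont: "continuous_on UNIV FP" and mn: "\<And>p. FP ps \<le> FP p"
    and uq: "\<And>p. FP p = FP ps \<Longrightarrow> p = ps"
    and bnd: "\<And>C. bounded {p. FP p \<le> C}" and e: "\<epsilon> > 0"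
  shows "\<exists>\<eta>>0. \<forall>p. FP p < FP ps + \<eta> \<longrightarrow> dist p ps < \<epsilon>"
proof -
  define S where "S = {p. \<epsilon> \<le> dist p ps} \<inter> {p. FP p \<le> FP ps + 1}"
  have cS: "closed S" unfolding S_def
    by (intro closed_Int closed_Collect_le cont continuous_intros)
  have bS: "bounded S" unfolding S_def by (rule bounded_subset[OF bnd]) auto
  have kS: "compact S" using cS bS by (simp add: compact_eq_bounded_closed)
  show ?thesis
  proof (cases "S = {}")
    case True
    show ?thesis
    proof (intro exI[of _ 1] conjI allI impI)
      fix p assume "FP p < FP ps + 1"
      show "dist p ps < \<epsilon>"
      proof (rule ccontr)
        assume "\<not> dist p ps < \<epsilon>"
        then have "p \<in> S" using \<open>FP p < FP ps + 1\<close> unfolding S_def by auto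
        then show False using True by simp
      qed
    qed simp
  next
    case False
    obtain q where q: "q \<in> S" "\<And>p. p \<in> S \<Longrightarrow> FP q \<le> FP p"
      using continuous_attains_inf[OF kS False continuous_on_subset[OF cont]] by blast
    have "FP q \<noteq> FP ps"
    proof
      assume "FP q = FP ps" then have "q = ps" by (rule uq)
      then show False using q(1) e unfolding S_def by simp
    qed
    then have pos: "FP q - FP ps > 0" using mn[of q] by linarith
    show ?thesis
    proof (intro exI[of _ "min 1 (FP q - FP ps)"] conjI allI impI)
      fix p assume p: "FP p < FP ps + min 1 (FP q - FP ps)"
      show "dist p ps < \<epsilon>"
      proof (rule ccontr)
        assume "\<not> dist p ps < \<epsilon>"
        then have "p \<in> S" using p unfolding S_def by auto
        then have "FP q \<le> FP p" by (rule q(2))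
        then show False using p by linarith
      qed
    qed (use pos in simp)
  qed
qed

lemma conv_from_sharp:
  fixes P :: "nat \<Rightarrow> 'a::metric_space" and FP :: "'a \<Rightarrow> real"
  assumes sh: "\<And>\<epsilon>. \<epsilon> > 0 \<Longrightarrow> \<exists>\<eta>>0. \<forall>p. FP p < FP ps + \<eta> \<longrightarrow> dist p ps < \<epsilon>"
    and lim: "(\<lambda>k. FP (P k)) \<longlonglongrightarrow> FP ps"
  shows "P \<longlonglongrightarrow> ps"
proof (rule tendstoI)
  fix \<epsilon> :: real assume "\<epsilon> > 0"
  then obtain \<eta> where \<eta>: "\<eta> > 0" "\<And>p. FP p < FP ps + \<eta> \<Longrightarrow> dist p ps < \<epsilon>" using sh by blast
  have "eventually (\<lambda>k. dist (FP (P k)) (FP ps) < \<eta>) sequentially"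
    using lim \<eta>(1) by (rule tendstoD)
  then show "eventually (\<lambda>k. dist (P k) ps < \<epsilon>) sequentially"
    by eventually_elim (use \<eta>(2) in \<open>auto simp: dist_real_def\<close>)
qed

lemma ev_finite: "eventually P sequentially \<Longrightarrow> finite {k. \<not> P k}"
proof -
  assume "eventually P sequentially"
  then obtain N where "\<And>k. k \<ge> N \<Longrightarrow> P k" by (auto simp: eventually_sequentially)
  then have "{k. \<not> P k} \<subseteq> {..<N}" by (auto simp: not_le[symmetric])
  then show ?thesis by (rule finite_subset) simp
qed


lemma phiH_comp_cont: "\<delta> > 0 \<Longrightarrow> continuous_on S g \<Longrightarrow> continuous_on S (\<lambda>x. phiH \<delta> (g x))"
  by (rule continuous_on_compose2[OF phiH_cont]) auto

lemma dphi_isCont: "\<delta> > 0 \<Longrightarrow> isCont (dphi \<delta>) x"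
  using dphi_cont continuous_on_eq_continuous_at by blast

lemma Fobj_cont:
  assumes d: "\<delta> > 0"
  shows "continuous_on UNIV (\<lambda>p::real \<times> (real^'p). Fobj n xs ys \<delta> lam1 lam2 lam3 (fst p) (snd p))"
  unfolding Fobj_def hfit_def l1norm_def
  by (intro continuous_intros phiH_comp_cont d)

lemma hfit_nonneg: "\<delta> > 0 \<Longrightarrow> 0 \<le> hfit n xs ys \<delta> b w"
  unfolding hfit_def by (intro mult_nonneg_nonneg sum_nonneg phiH_nonneg) auto

lemma Fobj_bnd:
  fixes xs :: "nat \<Rightarrow> real^'p"
  assumes d: "\<delta> > 0" and l1: "lam1 > 0" and l2: "lam2 \<ge> 0" and l3: "lam3 > 0"
  shows "bounded {p::real \<times> (real^'p). Fobj n xs ys \<delta> lam1 lam2 lam3 (fst p) (snd p) \<le> C}"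
  unfolding bounded_iff
proof (intro exI ballI)
  fix p :: "real \<times> (real^'p)"
  assume "p \<in> {p. Fobj n xs ys \<delta> lam1 lam2 lam3 (fst p) (snd p) \<le> C}"
  then have F: "Fobj n xs ys \<delta> lam1 lam2 lam3 (fst p) (snd p) \<le> C" by simp
  obtain b w where p: "p = (b, w)" by (cases p)
  have h0: "0 \<le> hfit n xs ys \<delta> b w" by (rule hfit_nonneg[OF d])
  have n0: "0 \<le> lam2 / 2 * (norm w)^2" using l2 by simp
  have l1n: "norm w \<le> l1norm w" unfolding l1norm_def by (rule norm_le_l1_cart)
  have b0: "0 \<le> lam3 / 2 * b^2" using l3 by simp
  have w0: "0 \<le> lam1 * norm w" using l1 by simp
  have "lam1 * norm w \<le> lam1 * l1norm w" using l1n l1 by simp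
  then have A: "lam1 * norm w + lam3 / 2 * b^2 \<le> C" using F h0 n0 p unfolding Fobj_def by simp
  then have "lam1 * norm w \<le> C" using b0 by linarith
  then have W: "norm w \<le> C / lam1" using l1 by (simp add: pos_le_divide_eq mult.commute)
  have "lam3 / 2 * b^2 \<le> C" using A w0 by linarith
  then have "b^2 \<le> C / (lam3 / 2)" using l3 by (simp add: pos_le_divide_eq mult.commute)
  moreover have "\<bar>b\<bar> \<le> 1 + b^2"
  proof -
    have sq: "0 \<le> (\<bar>b\<bar> - 1) * (\<bar>b\<bar> - 1)" by simp
    have "(\<bar>b\<bar> - 1) * (\<bar>b\<bar> - 1) = b * b - 2 * \<bar>b\<bar> + 1"
      by (simp add: algebra_simps abs_mult_self_eq)
    then have "2 * \<bar>b\<bar> \<le> b^2 + 1" using sq by (simp add: power2_eq_square)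
    moreover have "0 \<le> b^2" by simp
    ultimately show ?thesis by linarith
  qed
  ultimately have B: "\<bar>b\<bar> \<le> 1 + C / (lam3 / 2)" by linarith
  have "norm p \<le> norm b + norm w" unfolding p by (rule norm_Pair_le)
  then show "norm p \<le> 1 + C / (lam3 / 2) + C / lam1" using W B by simp
qed


theorem lemma1:
  fixes n :: nat and xs :: "nat \<Rightarrow> real^'p" and ys :: "nat \<Rightarrow> real"
    and lam1 lam2 lam3 \<delta> :: real
    and bs :: "nat \<Rightarrow> real" and ws :: "nat \<Rightarrow> real^'p"
    and bstar :: real and wstar :: "real^'p"
  assumes n: "n \<ge> 1"
    and y: "\<forall>i<n. ys i \<in> {-1, 1}"
    and l1: "lam1 > 0" and l2: "lam2 \<ge> 0" and l3: "lam3 > 0" and d: "\<delta> > 0"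
  defines "f \<equiv> hfit n xs ys \<delta>"
    and "Lf \<equiv> Lconst n xs ys \<delta>"
    and "F \<equiv> (\<lambda>b w. hfit n xs ys \<delta> b w + lam1 * l1norm w + lam2 / 2 * (norm w)^2 + lam3 / 2 * b^2)"
    and "Q \<equiv> (\<lambda>b w. hfit n xs ys \<delta> b w + lam2 / 2 * (norm w)^2 + lam3 / 2 * b^2)"
  assumes umin: "\<forall>b w. F bstar wstar \<le> F b w"
    and uuniq: "\<forall>b w. F b w = F bstar wstar \<longrightarrow> b = bstar \<and> w = wstar"
    and bit: "\<forall>k. bs (Suc k) = (Lf * bs k - pd_b f (bs k) (ws k)) / (Lf + lam3)"
    and wit: "\<forall>k. ws (Suc k) = (1 / (Lf + lam2)) *\<^sub>R soft lam1 (Lf *\<^sub>R ws k - pd_w f (bs k) (ws k))"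
  defines "h \<equiv> (\<lambda>b w i. w $ i - (1 / (Lconst n xs ys \<delta> + lam2)) * (pd_w Q b w $ i))"
    and "I \<equiv> {i. \<bar>pd_w Q bstar wstar $ i\<bar> < lam1}"
    and "E \<equiv> {i. \<bar>pd_w Q bstar wstar $ i\<bar> = lam1}"
  shows "{i. wstar $ i \<noteq> 0} \<subseteq> E \<and> (\<forall>i\<in>I. wstar $ i = 0) \<and>
         finite {k. \<not> ((\<forall>i\<in>I. ws k $ i = 0) \<and>
                        (\<forall>i\<in>E. sgn (h (bs k) (ws k) i) = sgn (h bstar wstar i)))}"
proof -
  have Lf_eq: "Lf = Lconst n xs ys \<delta>" by (simp add: Lf_def)
  have Lpos: "Lf > 0"
  proof -
    have "(\<Sum>i<n. (ys i)^2 * (1 + (norm (xs i))^2)) > 0"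
    proof (rule sum_pos)
      show "finite {..<n}" by simp
      have "0 \<in> {..<n}" using n by simp
      then show "{..<n} \<noteq> {}" by blast
      fix i assume "i \<in> {..<n}"
      then have "ys i = -1 \<or> ys i = 1" using y by auto
      then have "(ys i)^2 = 1" by auto
      then show "0 < (ys i)^2 * (1 + (norm (xs i))^2)" by (simp add: add_pos_nonneg)
    qed
    moreover have "1 / (real n * \<delta>) > 0" using n d by simp
    ultimately show ?thesis unfolding Lf_def Lconst_def by simp
  qed
  define m where "m = Lf + lam2"
  have mpos: "m > 0" unfolding m_def using Lpos l2 by simp
  have pdb: "pd_b f b w = gb n xs ys \<delta> b w" for b w unfolding f_def by (rule pdb_hfit[OF d])
  have pdw: "pd_w f b w = gw n xs ys \<delta> b w" for b w unfolding f_def by (rule pdw_hfit[OF d])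
  have pdQ: "pd_w Q b w = gw n xs ys \<delta> b w + lam2 *\<^sub>R w" for b w unfolding Q_def by (rule pdw_Q[OF d])
  have Feq: "F b w = Fobj n xs ys \<delta> lam1 lam2 lam3 b w" for b w unfolding F_def Fobj_def by simp
  have bs_step: "bs (Suc k) = (Lf * bs k - gb n xs ys \<delta> (bs k) (ws k)) / (Lf + lam3)" for k
    using bit pdb by simp
  have ws_step: "ws (Suc k) = (1 / (Lf + lam2)) *\<^sub>R soft lam1 (Lf *\<^sub>R ws k - gw n xs ys \<delta> (bs k) (ws k))" for k
    using wit pdw by simp
  have step: "F (bs (Suc k)) (ws (Suc k)) + Lf / 2 * ((zb - bs (Suc k))^2 + (norm (zw - ws (Suc k)))^2)
      \<le> F zb zw + Lf / 2 * ((zb - bs k)^2 + (norm (zw - ws k))^2)" for k zb zw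
    unfolding Feq by (rule ista_step[OF d Lf_eq Lpos _ l2 _ bs_step ws_step]) (use l1 l3 in auto)

  define b1 where "b1 = (Lf * bstar - gb n xs ys \<delta> bstar wstar) / (Lf + lam3)"
  define w1 where "w1 = (1 / (Lf + lam2)) *\<^sub>R soft lam1 (Lf *\<^sub>R wstar - gw n xs ys \<delta> bstar wstar)"
  have "F b1 w1 + Lf / 2 * ((bstar - b1)^2 + (norm (wstar - w1))^2)
      \<le> F bstar wstar + Lf / 2 * ((bstar - bstar)^2 + (norm (wstar - wstar))^2)"
    unfolding Feq by (rule ista_step[OF d Lf_eq Lpos _ l2 _ b1_def w1_def]) (use l1 l3 in auto)
  moreover have "0 \<le> Lf / 2 * ((bstar - b1)^2 + (norm (wstar - w1))^2)" using Lpos by simp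
  ultimately have "F b1 w1 \<le> F bstar wstar" by simp
  then have "F b1 w1 = F bstar wstar" using umin by (meson order_antisym)
  then have "w1 = wstar" using uuniq by blast
  then have fixp: "wstar = (1 / m) *\<^sub>R soft lam1 (Lf *\<^sub>R wstar - gw n xs ys \<delta> bstar wstar)"
    unfolding w1_def m_def by simp
  define R where "R b w i = Lf * w $ i - gw n xs ys \<delta> b w $ i" for b w i
  have fixi: "m * wstar $ i = sgn (R bstar wstar i) * max (\<bar>R bstar wstar i\<bar> - lam1) 0" for i
  proof -
    have "wstar $ i = (1 / m) * (sgn (R bstar wstar i) * max (\<bar>R bstar wstar i\<bar> - lam1) 0)"
      by (subst fixp) (simp add: soft_def R_def)
    then show ?thesis using mpos by simp
  qed
  have gQ: "pd_w Q bstar wstar $ i = m * wstar $ i - R bstar wstar i" for i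
    unfolding pdQ R_def m_def by (simp add: algebra_simps)
  have hR: "h b w i = R b w i / m" for b w i
  proof -
    have "h b w i = w $ i - (1 / m) * (gw n xs ys \<delta> b w $ i + lam2 * w $ i)"
      unfolding h_def pdQ m_def Lf_def by simp
    also have "\<dots> = R b w i / m" unfolding R_def m_def using mpos unfolding m_def
      by (simp add: field_simps)
    finally show ?thesis .
  qed

  have c1: "\<bar>pd_w Q bstar wstar $ i\<bar> = lam1 \<and> \<bar>R bstar wstar i\<bar> > lam1" if nz: "wstar $ i \<noteq> 0" for i
  proof -
    define r where "r = R bstar wstar i"
    have fr: "m * wstar $ i = sgn r * max (\<bar>r\<bar> - lam1) 0" using fixi r_def by simp
    have "m * wstar $ i \<noteq> 0" using nz mpos by simp
    then have gt: "\<bar>r\<bar> > lam1" and rnz: "r \<noteq> 0" using fr by (auto simp: max_def split: if_splits)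
    have "pd_w Q bstar wstar $ i = - sgn r * lam1"
    proof (cases "r > 0")
      case True then show ?thesis using gQ fr gt unfolding r_def by (simp add: max_def)
    next
      case False then have "r < 0" using rnz by simp
      then show ?thesis using gQ fr gt unfolding r_def by (simp add: max_def)
    qed
    then have "\<bar>pd_w Q bstar wstar $ i\<bar> = lam1" using rnz l1 by (simp add: abs_mult abs_sgn_eq)
    then show ?thesis using gt r_def by simp
  qed
  have c2: "wstar $ i = 0" if "i \<in> I" for i
    using that c1 unfolding I_def by force
  have c3: "R bstar wstar i \<noteq> 0" if "i \<in> E" for i
  proof (cases "wstar $ i = 0")
    case True
    then have "\<bar>R bstar wstar i\<bar> = lam1" using that gQ unfolding E_def by simp
    then show ?thesis using l1 by auto
  next
    case False then show ?thesis using c1 l1 by fastforce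
  qed
  have c4: "\<bar>R bstar wstar i\<bar> < lam1" if "i \<in> I" for i
    using that c2[OF that] gQ unfolding I_def by simp

  define FP where "FP p = Fobj n xs ys \<delta> lam1 lam2 lam3 (fst p) (snd p)" for p :: "real \<times> (real^'p)"
  define Dk where "Dk k = (bstar - bs k)^2 + (norm (wstar - ws k))^2" for k
  define a where "a k = F (bs (Suc k)) (ws (Suc k)) - F bstar wstar" for k
  have "a \<longlonglongrightarrow> 0"
  proof (rule telesc[where D = Dk and c = "Lf / 2"])
    show "a k \<ge> 0" for k unfolding a_def using umin by simp
    show "a k + Lf / 2 * Dk (Suc k) \<le> Lf / 2 * Dk k" for k
      unfolding a_def Dk_def using step[of k bstar wstar] by simp
    show "Dk k \<ge> 0" for k unfolding Dk_def by simp
    show "Lf / 2 > 0" using Lpos by simp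
  qed
  then have "(\<lambda>k. a k + F bstar wstar) \<longlonglongrightarrow> 0 + F bstar wstar" by (intro tendsto_intros)
  then have "(\<lambda>k. F (bs (Suc k)) (ws (Suc k))) \<longlonglongrightarrow> F bstar wstar" unfolding a_def by simp
  then have "(\<lambda>k. F (bs k) (ws k)) \<longlonglongrightarrow> F bstar wstar" by (rule LIMSEQ_imp_Suc)
  then have FPlim: "(\<lambda>k. FP (bs k, ws k)) \<longlonglongrightarrow> FP (bstar, wstar)" unfolding FP_def Feq by simp
  have sharp: "\<exists>\<eta>>0. \<forall>p. FP p < FP (bstar, wstar) + \<eta> \<longrightarrow> dist p (bstar, wstar) < \<epsilon>" if "\<epsilon> > 0" for \<epsilon>
  proof (rule sharp_min)
    show "continuous_on UNIV FP" unfolding FP_def by (rule Fobj_cont[OF d])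
    show "FP (bstar, wstar) \<le> FP p" for p using umin unfolding FP_def Feq by simp
    show "p = (bstar, wstar)" if "FP p = FP (bstar, wstar)" for p
      using that uuniq unfolding FP_def Feq by (metis prod.collapse fst_conv snd_conv)
    show "bounded {p. FP p \<le> C}" for C unfolding FP_def by (rule Fobj_bnd[OF d l1 l2 l3])
  qed (rule that)
  have pconv: "(\<lambda>k. (bs k, ws k)) \<longlonglongrightarrow> (bstar, wstar)"
    by (rule conv_from_sharp[where FP = FP, OF sharp FPlim])
  have bconv: "bs \<longlonglongrightarrow> bstar" using tendsto_fst[OF pconv] by simp
  have wconv: "ws \<longlonglongrightarrow> wstar" using tendsto_snd[OF pconv] by simp
  have Rconv: "(\<lambda>k. R (bs k) (ws k) i) \<longlonglongrightarrow> R bstar wstar i" for i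
  proof -
    have sconv: "(\<lambda>k. ys j * (bs k + xs j \<bullet> ws k)) \<longlonglongrightarrow> ys j * (bstar + xs j \<bullet> wstar)" for j
      by (intro tendsto_intros bconv wconv)
    have dconv: "(\<lambda>k. dphi \<delta> (ys j * (bs k + xs j \<bullet> ws k))) \<longlonglongrightarrow> dphi \<delta> (ys j * (bstar + xs j \<bullet> wstar))" for j
      by (rule isCont_tendsto_compose[OF dphi_isCont[OF d] sconv])
    have "(\<lambda>k. Lf * ws k $ i - (1 / real n) * (\<Sum>j<n. dphi \<delta> (ys j * (bs k + xs j \<bullet> ws k)) * ys j * xs j $ i))
       \<longlonglongrightarrow> Lf * wstar $ i - (1 / real n) * (\<Sum>j<n. dphi \<delta> (ys j * (bstar + xs j \<bullet> wstar)) * ys j * xs j $ i)"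
      by (intro tendsto_diff tendsto_mult tendsto_const tendsto_sum tendsto_vec_nth wconv dconv)
    then show ?thesis unfolding R_def gw_def by simp
  qed

  have evI: "eventually (\<lambda>k. \<forall>i\<in>I. ws k $ i = 0) sequentially"
  proof (rule eventually_ball_finite)
    show "finite I" by simp
    show "\<forall>i\<in>I. eventually (\<lambda>k. ws k $ i = 0) sequentially"
    proof
      fix i assume iI: "i \<in> I"
      have "(\<lambda>k. \<bar>R (bs k) (ws k) i\<bar>) \<longlonglongrightarrow> \<bar>R bstar wstar i\<bar>" by (intro tendsto_intros Rconv)
      then have "eventually (\<lambda>k. \<bar>R (bs k) (ws k) i\<bar> < lam1) sequentially"
        using c4[OF iI] by (rule order_tendstoD)
      then have "eventually (\<lambda>k. ws (Suc k) $ i = 0) sequentially"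
      proof eventually_elim
        case (elim k)
        have "ws (Suc k) $ i = (1 / m) * (sgn (R (bs k) (ws k) i) * max (\<bar>R (bs k) (ws k) i\<bar> - lam1) 0)"
          by (subst ws_step) (simp add: soft_def R_def m_def)
        then show ?case using elim by simp
      qed
      then show "eventually (\<lambda>k. ws k $ i = 0) sequentially" using eventually_sequentially_Suc[of "\<lambda>k. ws k $ i = 0"] by blast
    qed
  qed
  have evE: "eventually (\<lambda>k. \<forall>i\<in>E. sgn (h (bs k) (ws k) i) = sgn (h bstar wstar i)) sequentially"
  proof (rule eventually_ball_finite)
    show "finite E" by simp
    show "\<forall>i\<in>E. eventually (\<lambda>k. sgn (h (bs k) (ws k) i) = sgn (h bstar wstar i)) sequentially"
    proof
      fix i assume iE: "i \<in> E"
      show "eventually (\<lambda>k. sgn (h (bs k) (ws k) i) = sgn (h bstar wstar i)) sequentially"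
      proof (cases "R bstar wstar i > 0")
        case True
        have "eventually (\<lambda>k. R (bs k) (ws k) i > 0) sequentially"
          using Rconv True by (rule order_tendstoD)
        then show ?thesis
        proof eventually_elim
          case (elim k) then show ?case using True mpos unfolding hR by simp
        qed
      next
        case False
        then have neg: "R bstar wstar i < 0" using c3[OF iE] by simp
        have "eventually (\<lambda>k. R (bs k) (ws k) i < 0) sequentially"
          using Rconv neg by (rule order_tendstoD)
        then show ?thesis
        proof eventually_elim
          case (elim k) then show ?case using neg mpos unfolding hR by (simp add: divide_neg_pos)
        qed
      qed
    qed
  qed
  have fin: "finite {k. \<not> ((\<forall>i\<in>I. ws k $ i = 0) \<and>
                        (\<forall>i\<in>E. sgn (h (bs k) (ws k) i) = sgn (h bstar wstar i)))}"
    by (rule ev_finite) (rule eventually_conj[OF evI evE])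
  have supp: "{i. wstar $ i \<noteq> 0} \<subseteq> E" using c1 unfolding E_def by auto
  show ?thesis using supp c2 fin by blast
qed

end
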